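(* Assume Condition 1. Pick any $\pi\in\Pi$ and $t\ge t_1$. If $\bar V_t(\pi)>\theta K$, then \[\Delta_t(\pi)>2\sqrt{\frac{2\,\bar V_t(\pi)\,C_t}{t}}.\]
   Context: Contextual bandit setting: $A$ a set of $K$ actions, $X$ contexts, $\Pi$ a finite set of $N$ policies, $D$ a distribution over $(x,\vec r)\in X\times[0,1]^K$ with marginal $D_X$; $(x_t,\vec r_t)\sim D$ i.i.d., the learner observes $x_t$, picks $a_t$, sees only $r_t:=r_t(a_t)$. $\eta_D(\pi)=\mathbb{E}[r(\pi(x))]$, $\pi^*$ a maximizer. $W_P(x,a)=\sum_{\pi:\pi(x)=a}P(\pi)$. With history $((x_i,a_i,r_i,p_i))_{i\le t}$, $\eta_t(W)=\frac1t\sum_i r_iW(x_i,a_i)/p_i$ for randomized policies $W$, $\pi_t=\arg\max_\pi\eta_t(\pi)$, $\Delta_t(W)=\eta_t(\pi_t)-\eta_t(W)$; $\mathbb{E}_{x\sim h_{t-1}}$ is the average over $x_1,\dots,x_{t-1}$. Actions are chosen by RandomizedUCB$(\Pi,\delta,K)$: $C_t=2\log(Nt/\delta)$, $\mu_t=\min\{\frac1{2K},\sqrt{C_t/(2Kt)}\}$; $P_t$ is a distribution over $\Pi$ whose objective $\sum_\pi P(\pi)\Delta_{t-1}(\pi)$ is within $\epsilon_{\mathrm{opt},t}=O(\sqrt{KC_t/t})$ of the optimum of minimizing it subject to: for all distributions $Q$ over $\Pi$, $\mathbb{E}_{\pi\sim Q}\mathbb{E}_{x\sim h_{t-1}}[1/((1-K\mu_t)W_P(x,\pi(x))+\mu_t)]\le\max\{4K,(t-1)\Delta_{t-1}(W_Q)^2/(180C_{t-1})\}$,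 with each constraint satisfied up to additive slack $K$; $W'_t(a)=(1-K\mu_t)W_{P_t}(x_t,a)+\mu_t$, $a_t\sim W'_t$, $p_t=W'_t(a_t)$. Constants: $\epsilon\in(0,1)$ fixed, $\rho=7500/\epsilon^3$, $\theta=(\rho+1)/(1-(1+\epsilon)/2)$. $t_0$ is the first $t$ with $\mu_t=\sqrt{C_t/(2Kt)}$; $t_1=\lceil16K\log(8KN/\delta)\rceil$. $V_t(\pi)=K$ for $t\le t_0$ and $V_t(\pi)=K+\mathbb{E}_{x\sim D_X}[1/((1-K\mu_t)W_{P_t}(x,\pi(x))+\mu_t)]$ for $t>t_0$; $\bar V_t(\pi)=\max_{\tau\le t}V_\tau(\pi)$. Condition 1: (i) for all $\pi\in\Pi$ and $t\ge t_1$, $\mathbb{E}_{x\sim D_X}[1/((1-K\mu_t)W_{P_t}(x,\pi(x))+\mu_t)]\le(1+\epsilon)\mathbb{E}_{x\sim h_{t-1}}[1/((1-K\mu_t)W_{P_t}(x,\pi(x))+\mu_t)]+\rho K$; and (ii) for all $\pi,\pi'\in\Pi$ and $t\ge t_0$, $|(\eta_t(\pi)-\eta_t(\pi'))-(\eta_D(\pi)-\eta_D(\pi'))|\le2\sqrt{(\bar V_t(\pi)+\bar V_t(\pi'))C_t/t}$. *)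

theory Defs
  imports "HOL-Probability.Probability"
begin

text \<open>K = number of actions, N = number of policies.
  Policies are functions 'x => 'a; a (randomized) policy W is a function 'x => 'a => real.
  Histories are indexed 1,2,3,...: xs i, as i, rs i, ps i are context, action,
  observed reward and probability at round i; Ps t is the distribution P_t over policies.\<close>

definition Cc :: "nat \<Rightarrow> real \<Rightarrow> nat \<Rightarrow> real" where
  "Cc N \<delta> t = 2 * ln (real N * real t / \<delta>)"

definition mu :: "nat \<Rightarrow> nat \<Rightarrow> real \<Rightarrow> nat \<Rightarrow> real" where
  "mu K N \<delta> t = min (1 / (2 * real K)) (sqrt (Cc N \<delta> t / (2 * real K * real t)))"

definition t0 :: "nat \<Rightarrow> nat \<Rightarrow> real \<Rightarrow> nat" where
  "t0 K N \<delta> = (LEAST t. 1 \<le> t \<and> mu K N \<delta> t = sqrt (Cc N \<delta> t / (2 * real K * real t)))"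

definition t1 :: "nat \<Rightarrow> nat \<Rightarrow> real \<Rightarrow> nat" where
  "t1 K N \<delta> = nat \<lceil>16 * real K * ln (8 * real K * real N / \<delta>)\<rceil>"

definition Wd :: "('x \<Rightarrow> 'a) set \<Rightarrow> (('x \<Rightarrow> 'a) \<Rightarrow> real) \<Rightarrow> 'x \<Rightarrow> 'a \<Rightarrow> real" where
  "Wd Pol P x a = sum P {\<pi> \<in> Pol. \<pi> x = a}"

definition polW :: "('x \<Rightarrow> 'a) \<Rightarrow> 'x \<Rightarrow> 'a \<Rightarrow> real" where
  "polW \<pi> x a = (if \<pi> x = a then 1 else 0)"

definition eta_emp :: "(nat \<Rightarrow> 'x) \<Rightarrow> (nat \<Rightarrow> 'a) \<Rightarrow> (nat \<Rightarrow> real) \<Rightarrow> (nat \<Rightarrow> real)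
    \<Rightarrow> nat \<Rightarrow> ('x \<Rightarrow> 'a \<Rightarrow> real) \<Rightarrow> real" where
  "eta_emp xs as rs ps t W = (\<Sum>i\<in>{1..t}. rs i * W (xs i) (as i) / ps i) / real t"

definition Delta_emp :: "('x \<Rightarrow> 'a) set \<Rightarrow> (nat \<Rightarrow> 'x) \<Rightarrow> (nat \<Rightarrow> 'a) \<Rightarrow> (nat \<Rightarrow> real)
    \<Rightarrow> (nat \<Rightarrow> real) \<Rightarrow> nat \<Rightarrow> ('x \<Rightarrow> 'a \<Rightarrow> real) \<Rightarrow> real" where
  "Delta_emp Pol xs as rs ps t W =
     Max ((\<lambda>\<pi>. eta_emp xs as rs ps t (polW \<pi>)) ` Pol) - eta_emp xs as rs ps t W"

definition emp_avg :: "(nat \<Rightarrow> 'x) \<Rightarrow> nat \<Rightarrow> ('x \<Rightarrow> real) \<Rightarrow> real" where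
  "emp_avg xs t f = (\<Sum>i\<in>{1..t}. f (xs i)) / real t"

definition is_dist :: "('x \<Rightarrow> 'a) set \<Rightarrow> (('x \<Rightarrow> 'a) \<Rightarrow> real) \<Rightarrow> bool" where
  "is_dist Pol Q \<longleftrightarrow> (\<forall>\<pi>\<in>Pol. 0 \<le> Q \<pi>) \<and> sum Q Pol = 1"

definition inv_prob :: "nat \<Rightarrow> nat \<Rightarrow> real \<Rightarrow> ('x \<Rightarrow> 'a) set \<Rightarrow> (('x \<Rightarrow> 'a) \<Rightarrow> real)
    \<Rightarrow> nat \<Rightarrow> 'x \<Rightarrow> ('x \<Rightarrow> 'a) \<Rightarrow> real" where
  "inv_prob K N \<delta> Pol P t x \<pi> =
     1 / ((1 - real K * mu K N \<delta> t) * Wd Pol P x (\<pi> x) + mu K N \<delta> t)"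

definition constr_lhs :: "nat \<Rightarrow> nat \<Rightarrow> real \<Rightarrow> ('x \<Rightarrow> 'a) set \<Rightarrow> (nat \<Rightarrow> 'x)
    \<Rightarrow> (('x \<Rightarrow> 'a) \<Rightarrow> real) \<Rightarrow> nat \<Rightarrow> (('x \<Rightarrow> 'a) \<Rightarrow> real) \<Rightarrow> real" where
  "constr_lhs K N \<delta> Pol xs P t Q =
     (\<Sum>\<pi>\<in>Pol. Q \<pi> * emp_avg xs (t - 1) (\<lambda>x. inv_prob K N \<delta> Pol P t x \<pi>))"

definition constr_rhs :: "nat \<Rightarrow> nat \<Rightarrow> real \<Rightarrow> ('x \<Rightarrow> 'a) set \<Rightarrow> (nat \<Rightarrow> 'x)
    \<Rightarrow> (nat \<Rightarrow> 'a) \<Rightarrow> (nat \<Rightarrow> real) \<Rightarrow> (nat \<Rightarrow> real) \<Rightarrow> nat \<Rightarrow> (('x \<Rightarrow> 'a) \<Rightarrow> real) \<Rightarrow> real" where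
  "constr_rhs K N \<delta> Pol xs as rs ps t Q =
     max (4 * real K)
         (real (t - 1) * (Delta_emp Pol xs as rs ps (t - 1) (Wd Pol Q))\<^sup>2 / (180 * Cc N \<delta> (t - 1)))"

definition objective :: "('x \<Rightarrow> 'a) set \<Rightarrow> (nat \<Rightarrow> 'x) \<Rightarrow> (nat \<Rightarrow> 'a) \<Rightarrow> (nat \<Rightarrow> real)
    \<Rightarrow> (nat \<Rightarrow> real) \<Rightarrow> nat \<Rightarrow> (('x \<Rightarrow> 'a) \<Rightarrow> real) \<Rightarrow> real" where
  "objective Pol xs as rs ps t P = (\<Sum>\<pi>\<in>Pol. P \<pi> * Delta_emp Pol xs as rs ps (t - 1) (polW \<pi>))"

text \<open>V_t(pi), with E_{x ~ D_X} f(x) written as the integral of f(fst z) over z = (x, r) ~ D.\<close>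
definition Vt :: "('x \<times> ('a \<Rightarrow> real)) measure \<Rightarrow> nat \<Rightarrow> nat \<Rightarrow> real \<Rightarrow> ('x \<Rightarrow> 'a) set
    \<Rightarrow> (nat \<Rightarrow> ('x \<Rightarrow> 'a) \<Rightarrow> real) \<Rightarrow> nat \<Rightarrow> ('x \<Rightarrow> 'a) \<Rightarrow> real" where
  "Vt D K N \<delta> Pol Ps t \<pi> =
     (if t \<le> t0 K N \<delta> then real K
      else real K + (\<integral>z. inv_prob K N \<delta> Pol (Ps t) t (fst z) \<pi> \<partial>D))"

definition Vbar :: "('x \<times> ('a \<Rightarrow> real)) measure \<Rightarrow> nat \<Rightarrow> nat \<Rightarrow> real \<Rightarrow> ('x \<Rightarrow> 'a) set
    \<Rightarrow> (nat \<Rightarrow> ('x \<Rightarrow> 'a) \<Rightarrow> real) \<Rightarrow> nat \<Rightarrow> ('x \<Rightarrow> 'a) \<Rightarrow> real" where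
  "Vbar D K N \<delta> Pol Ps t \<pi> = Max ((\<lambda>\<tau>. Vt D K N \<delta> Pol Ps \<tau> \<pi>) ` {1..t})"

definition etaD :: "('x \<times> ('a \<Rightarrow> real)) measure \<Rightarrow> ('x \<Rightarrow> 'a) \<Rightarrow> real" where
  "etaD D \<pi> = (\<integral>z. snd z (\<pi> (fst z)) \<partial>D)"

end

theory Submission
  imports Defs
begin


lemma ln3: "ln (3::real) \<ge> 1"
proof -
  have "ln (exp 1) \<le> ln (3::real)" using exp_le by (subst ln_le_cancel_iff) auto
  then show ?thesis by simp
qed

lemma ratio0: fixes a s1 s2 :: real
  assumes a1: "a \<ge> 1" and s: "3 \<le> s1" "s1 \<le> s2"
  shows "ln (a * s2) / s2 \<le> ln (a * s1) / s1"
proof -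
  have p1: "s1 > 0" "s2 > 0" using s by auto
  have "a * s1 \<ge> 1 * 3" using a1 s by (intro mult_mono) auto
  then have "ln (a * s1) \<ge> ln 3" by (subst ln_le_cancel_iff) auto
  then have L1: "ln (a * s1) \<ge> 1" using ln3 by linarith
  have eq: "a * s2 = (a * s1) * (s2 / s1)" using p1 by simp
  have "ln ((a * s1) * (s2 / s1)) = ln (a * s1) + ln (s2 / s1)"
    using p1 a1 by (intro ln_mult_pos) auto
  then have "ln (a * s2) = ln (a * s1) + ln (s2 / s1)" using eq by simp
  also have "ln (s2 / s1) \<le> s2 / s1 - 1" using p1 by (intro ln_le_minus_one) simp
  also have "s2 / s1 - 1 \<le> (s2 / s1 - 1) * ln (a * s1)"
  proof -
    have "s2 / s1 \<ge> 1" using p1 s by (simp add: le_divide_eq)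
    then show ?thesis using L1 by (simp add: mult_le_cancel_left1)
  qed
  finally have "ln (a * s2) \<le> (s2 / s1) * ln (a * s1)" by (simp add: algebra_simps)
  then have "ln (a * s2) \<le> s2 * (ln (a * s1) / s1)" by simp
  then show ?thesis using p1 by (simp add: divide_le_eq mult.commute)
qed

lemma sq_helper: "0 \<le> X \<Longrightarrow> 2 * sqrt (2 * X) \<le> 3 * sqrt (X::real)"
proof -
  assume "0 \<le> X"
  have a: "sqrt (4 * (2 * X)) = 2 * sqrt (2 * X)" by (subst real_sqrt_mult) simp
  have b: "sqrt (9 * X) = 3 * sqrt X"
  proof -
    have "sqrt 9 = (3::real)" by (simp add: real_sqrt_unique)
    then show ?thesis by (subst real_sqrt_mult) simp
  qed
  have "sqrt (4 * (2 * X)) \<le> sqrt (9 * X)" using \<open>0 \<le> X\<close> by (intro real_sqrt_le_mono) simp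
  then show ?thesis using a b by simp
qed

lemma sq_helper_strict: "0 < X \<Longrightarrow> 2 * sqrt (2 * X) < 3 * sqrt (X::real)"
proof -
  assume "0 < X"
  have a: "sqrt (4 * (2 * X)) = 2 * sqrt (2 * X)" by (subst real_sqrt_mult) simp
  have b: "sqrt (9 * X) = 3 * sqrt X"
  proof -
    have "sqrt 9 = (3::real)" by (simp add: real_sqrt_unique)
    then show ?thesis by (subst real_sqrt_mult) simp
  qed
  have "sqrt (4 * (2 * X)) < sqrt (9 * X)" using \<open>0 < X\<close> by (intro real_sqrt_less_mono) simp
  then show ?thesis using a b by simp
qed

locale rucb =
  fixes A :: "'a set" and Pol :: "('x \<Rightarrow> 'a) set"
    and D :: "('x \<times> ('a \<Rightarrow> real)) measure"
    and \<delta> \<epsilon> :: real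
    and xs :: "nat \<Rightarrow> 'x" and as :: "nat \<Rightarrow> 'a" and rs ps :: "nat \<Rightarrow> real"
    and Ps :: "nat \<Rightarrow> ('x \<Rightarrow> 'a) \<Rightarrow> real"
    and K N :: nat and \<rho> \<theta> :: real
  assumes K_def: "K = card A" and N_def: "N = card Pol"
    and rho_def: "\<rho> = 7500 / \<epsilon> ^ 3"
    and theta_def: "\<theta> = (\<rho> + 1) / (1 - (1 + \<epsilon>) / 2)"
    and A_fin: "finite A" and A_ne: "A \<noteq> {}"
    and Pi_fin: "finite Pol" and Pi_ne: "Pol \<noteq> {}"
    and D_prob: "prob_space D"
    and \<delta>_pos: "0 < \<delta>" and \<delta>_lt: "\<delta> < 1"
    and \<epsilon>_pos: "0 < \<epsilon>" and \<epsilon>_lt: "\<epsilon> < 1"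
    and alg_dist: "\<forall>s\<ge>1. is_dist Pol (Ps s)"
    and alg_constr: "\<forall>s\<ge>1. \<forall>Q. is_dist Pol Q \<longrightarrow>
        constr_lhs K N \<delta> Pol xs (Ps s) s Q \<le> constr_rhs K N \<delta> Pol xs as rs ps s Q + real K"
    and cond1_i: "\<forall>\<sigma>\<in>Pol. \<forall>s\<ge>t1 K N \<delta>.
        (\<integral>z. inv_prob K N \<delta> Pol (Ps s) s (fst z) \<sigma> \<partial>D)
          \<le> (1 + \<epsilon>) * emp_avg xs (s - 1) (\<lambda>x. inv_prob K N \<delta> Pol (Ps s) s x \<sigma>) + \<rho> * real K"
    and cond1_ii: "\<forall>\<sigma>\<in>Pol. \<forall>\<sigma>'\<in>Pol. \<forall>s\<ge>t0 K N \<delta>.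
        \<bar>(eta_emp xs as rs ps s (polW \<sigma>) - eta_emp xs as rs ps s (polW \<sigma>'))
           - (etaD D \<sigma> - etaD D \<sigma>')\<bar>
        \<le> 2 * sqrt ((Vbar D K N \<delta> Pol Ps s \<sigma> + Vbar D K N \<delta> Pol Ps s \<sigma>') * Cc N \<delta> s / real s)"
begin

abbreviation "C s \<equiv> Cc N \<delta> s"
abbreviation "eta s \<sigma> \<equiv> eta_emp xs as rs ps s (polW \<sigma>)"
abbreviation "Dl s \<sigma> \<equiv> Delta_emp Pol xs as rs ps s (polW \<sigma>)"
abbreviation "V s \<sigma> \<equiv> Vt D K N \<delta> Pol Ps s \<sigma>"
abbreviation "Vb s \<sigma> \<equiv> Vbar D K N \<delta> Pol Ps s \<sigma>"

lemma K_ge1: "real K \<ge> 1"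
  using A_fin A_ne K_def by (simp add: Suc_leI card_gt_0_iff)

lemma N_ge1: "real N \<ge> 1"
  using Pi_fin Pi_ne N_def by (simp add: Suc_leI card_gt_0_iff)

lemma rho_ge: "\<rho> \<ge> 7500"
proof -
  have "\<epsilon> ^ 3 \<le> 1" using \<epsilon>_pos \<epsilon>_lt by (simp add: power_le_one)
  moreover have "\<epsilon> ^ 3 > 0" using \<epsilon>_pos by simp
  ultimately show ?thesis unfolding rho_def by (simp add: le_divide_eq)
qed

lemma theta_ge: "\<theta> \<ge> 20"
proof -
  have "1 - (1 + \<epsilon>) / 2 > 0" "1 - (1 + \<epsilon>) / 2 \<le> 1" using \<epsilon>_pos \<epsilon>_lt by auto
  moreover have "\<rho> + 1 \<ge> 0" using rho_ge by simp
  ultimately have "(\<rho> + 1) * (1 - (1 + \<epsilon>) / 2) \<le> (\<rho> + 1) * 1"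
    by (intro mult_left_mono) auto
  then have "\<theta> \<ge> \<rho> + 1" unfolding theta_def using \<open>1 - (1 + \<epsilon>) / 2 > 0\<close> by (simp add: le_divide_eq)
  then show ?thesis using rho_ge by simp
qed

lemma theta_prop: "x > \<theta> * real K \<Longrightarrow> (1 - \<epsilon>) * x > 2 * (\<rho> + 1) * real K"
proof -
  assume "x > \<theta> * real K"
  have p: "1 - (1 + \<epsilon>) / 2 > 0" using \<epsilon>_lt by auto
  have "\<theta> * (1 - \<epsilon>) = 2 * (\<rho> + 1)" unfolding theta_def using p by (simp add: field_simps)
  then have "(1 - \<epsilon>) * x > (1 - \<epsilon>) * (\<theta> * real K)" using \<open>x > _\<close> \<epsilon>_lt by simp
  moreover have "(1 - \<epsilon>) * (\<theta> * real K) = 2 * (\<rho> + 1) * real K"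
    using \<open>\<theta> * (1 - \<epsilon>) = _\<close> by (metis mult.commute mult.left_commute)
  ultimately show ?thesis by linarith
qed

lemma thK: "\<theta> * real K > 0"
  using theta_ge K_ge1 by simp

lemma C_pos: "s \<ge> 1 \<Longrightarrow> C s > 0"
proof -
  assume "s \<ge> 1"
  have "real N * real s \<ge> 1" using N_ge1 \<open>s\<ge>1\<close> by (metis less_one linorder_not_le mult_ge1_I nat_less_le of_nat_1 of_nat_le_iff)
  then have "real N * real s / \<delta> > 1" using \<delta>_pos \<delta>_lt by (simp add: less_divide_eq)
  then show ?thesis unfolding Cc_def by simp
qed

lemma C_ge_ln: "s \<ge> 1 \<Longrightarrow> C s \<ge> 2 * ln (real s) \<and> C s \<ge> 2 * ln (real N / \<delta>)"
proof -
  assume "s \<ge> 1"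
  have x1: "real N * real s \<ge> 1 * real s" using N_ge1 by (intro mult_right_mono) auto
  have "(real N * real s) * \<delta> \<le> real N * real s" using \<delta>_lt x1
    by (intro mult_left_le) auto
  then have "real N * real s / \<delta> \<ge> real N * real s" using \<delta>_pos by (simp add: le_divide_eq)
  then have "real N * real s / \<delta> \<ge> real s" using x1 by linarith
  moreover have "real N * real s / \<delta> \<ge> real N / \<delta>" using \<open>s\<ge>1\<close> \<delta>_pos N_ge1
    by (simp add: divide_right_mono)
  moreover have "real s > 0" "real N / \<delta> > 0" using \<open>s\<ge>1\<close> \<delta>_pos N_ge1 by auto
  ultimately show ?thesis unfolding Cc_def by auto
qed

lemma mu_pos: "s \<ge> 1 \<Longrightarrow> mu K N \<delta> s > 0"
  using C_pos[of s] K_ge1 unfolding mu_def by auto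

lemma mu_le: "mu K N \<delta> s \<le> 1 / (2 * real K)"
  unfolding mu_def by simp

lemma Wd_bounds: "s \<ge> 1 \<Longrightarrow> 0 \<le> Wd Pol (Ps s) x a \<and> Wd Pol (Ps s) x a \<le> 1"
proof -
  assume "s \<ge> 1"
  then have d: "is_dist Pol (Ps s)" using alg_dist by auto
  then have nn: "\<forall>\<pi>\<in>Pol. 0 \<le> Ps s \<pi>" and one: "sum (Ps s) Pol = 1" unfolding is_dist_def by auto
  have "0 \<le> sum (Ps s) {\<pi> \<in> Pol. \<pi> x = a}" using nn by (intro sum_nonneg) auto
  moreover have "sum (Ps s) {\<pi> \<in> Pol. \<pi> x = a} \<le> sum (Ps s) Pol"
    using nn Pi_fin by (intro sum_mono2) auto
  ultimately show ?thesis using one unfolding Wd_def by simp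
qed

lemma inv_prob_bounds: "s \<ge> 1 \<Longrightarrow> 0 < inv_prob K N \<delta> Pol (Ps s) s x \<sigma> \<and> inv_prob K N \<delta> Pol (Ps s) s x \<sigma> \<le> 1 / mu K N \<delta> s"
proof -
  assume s: "s \<ge> 1"
  define m where "m = mu K N \<delta> s"
  define w where "w = Wd Pol (Ps s) x (\<sigma> x)"
  have m: "0 < m" "m \<le> 1 / (2 * real K)" using mu_pos[OF s] mu_le m_def by auto
  have "real K * m \<le> 1/2" using m K_ge1 by (simp add: le_divide_eq mult.commute)
  then have c: "1 - real K * m \<ge> 0" by simp
  have w: "0 \<le> w" using Wd_bounds[OF s] w_def by auto
  have den: "(1 - real K * m) * w + m \<ge> m" using c w by simp
  then have "(1 - real K * m) * w + m > 0" using m by simp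
  moreover have "1 / ((1 - real K * m) * w + m) \<le> 1 / m" using den m by (intro divide_left_mono) auto
  ultimately show ?thesis unfolding inv_prob_def m_def[symmetric] w_def[symmetric] by simp
qed

lemma integral_inv_le: "s \<ge> 1 \<Longrightarrow> (\<integral>z. inv_prob K N \<delta> Pol (Ps s) s (fst z) \<sigma> \<partial>D) \<le> 1 / mu K N \<delta> s"
proof -
  assume s: "s \<ge> 1"
  interpret prob_space D by (rule D_prob)
  have "(\<integral>z. inv_prob K N \<delta> Pol (Ps s) s (fst z) \<sigma> \<partial>D) \<le> (\<integral>z. 1 / mu K N \<delta> s \<partial>D)"
    using inv_prob_bounds[OF s] mu_pos[OF s] by (intro integral_mono') auto
  also have "\<dots> = 1 / mu K N \<delta> s" by (simp add: prob_space)
  finally show ?thesis .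
qed

lemma V_le: "s \<ge> 1 \<Longrightarrow> V s \<sigma> \<le> real K + 1 / mu K N \<delta> s"
  using integral_inv_le[of s \<sigma>] mu_pos[of s] unfolding Vt_def by auto

lemma t0_ex: "\<exists>s. 1 \<le> s \<and> mu K N \<delta> s = sqrt (C s / (2 * real K * real s))"
proof -
  define b where "b = 64 * real K ^ 2 * real N / \<delta>"
  define s where "s = nat \<lceil>b\<rceil> + 1"
  have s1: "s \<ge> 1" and sb: "real s \<ge> b" unfolding s_def using real_nat_ceiling_ge[of b] by auto
  have spos: "real s > 0" using s1 by simp
  define y where "y = sqrt (real N * real s / \<delta>)"
  have ypos: "y > 0" unfolding y_def using N_ge1 spos \<delta>_pos by simp
  have "ln (real N * real s / \<delta>) = ln (y ^ 2)" unfolding y_def using N_ge1 spos \<delta>_pos by simp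
  also have "\<dots> = 2 * ln y" using ypos by (simp add: ln_realpow)
  also have "\<dots> \<le> 2 * y" using ln_le_minus_one[OF ypos] by simp
  finally have Cle: "C s \<le> 4 * y" unfolding Cc_def by simp
  have "y ^ 2 = real N * real s / \<delta>" unfolding y_def using N_ge1 spos \<delta>_pos by simp
  also have "\<dots> \<le> real s * real s / (64 * real K ^ 2)"
  proof -
    have "b * real s \<le> real s * real s" using sb spos by (simp add: mult_right_mono)
    then show ?thesis unfolding b_def using K_ge1 \<delta>_pos by (simp add: field_simps)
  qed
  finally have "y ^ 2 \<le> (real s / (8 * real K)) ^ 2" by (simp add: power2_eq_square)
  then have "y \<le> real s / (8 * real K)"
    by (rule power2_le_imp_le) (use spos K_ge1 in auto)
  then have "C s \<le> real s / (2 * real K)" using Cle by simp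
  then have "C s * (2 * real K) \<le> real s" using K_ge1 by (simp add: le_divide_eq)
  then have "C s / (2 * real K * real s) \<le> 1 / (4 * real K * real K)"
    using K_ge1 spos by (simp add: divide_simps) (simp add: algebra_simps)
  also have "\<dots> = (1 / (2 * real K)) ^ 2" by (simp add: power2_eq_square)
  finally have "sqrt (C s / (2 * real K * real s)) \<le> sqrt ((1 / (2 * real K)) ^ 2)"
    by (rule real_sqrt_le_mono)
  then have "sqrt (C s / (2 * real K * real s)) \<le> 1 / (2 * real K)"
    using K_ge1 by simp
  then show ?thesis using s1 unfolding mu_def by (intro exI[of _ s]) auto
qed

lemma t0_ge1: "t0 K N \<delta> \<ge> 1"
proof -
  have "1 \<le> (LEAST t. 1 \<le> t \<and> mu K N \<delta> t = sqrt (C t / (2 * real K * real t))) \<and>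
        mu K N \<delta> (LEAST t. 1 \<le> t \<and> mu K N \<delta> t = sqrt (C t / (2 * real K * real t)))
        = sqrt (C (LEAST t. 1 \<le> t \<and> mu K N \<delta> t = sqrt (C t / (2 * real K * real t))) /
           (2 * real K * real (LEAST t. 1 \<le> t \<and> mu K N \<delta> t = sqrt (C t / (2 * real K * real t)))))"
    by (rule LeastI_ex[OF t0_ex])
  then show ?thesis unfolding t0_def by (rule conjunct1)
qed

lemma ln2_ge: "ln (2::real) \<ge> 1/2"
proof -
  have "ln (1/2::real) \<le> 1/2 - 1" by (rule ln_le_minus_one) simp
  moreover have "ln (1/2::real) = - ln 2" by (simp add: ln_div)
  ultimately show ?thesis by linarith
qed

lemma bigV:
  assumes tau1: "1 \<le> \<tau>" and big: "V \<tau> \<sigma> > \<theta> * real K"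
  shows "\<tau> > t0 K N \<delta> \<and> \<tau> \<ge> 2 \<and> \<tau> \<ge> t1 K N \<delta> \<and> real \<tau> \<ge> 180"
proof -
  have th: "\<theta> * real K \<ge> 20 * real K" using theta_ge K_ge1 by (simp add: mult_right_mono)
  have gt0: "\<tau> > t0 K N \<delta>"
  proof (rule ccontr)
    assume "\<not> ?thesis"
    then have "V \<tau> \<sigma> = real K" unfolding Vt_def by simp
    then show False using big th K_ge1 by simp
  qed
  then have t2: "\<tau> \<ge> 2" using t0_ge1 by simp
  define m where "m = mu K N \<delta> \<tau>"
  have mpos: "m > 0" using mu_pos[OF tau1] m_def by simp
  have "\<theta> * real K < real K + 1 / m" using V_le[OF tau1, of \<sigma>] big m_def by simp
  then have inv_big: "1 / m > 19 * real K" using th by simp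
  define X where "X = C \<tau> / (2 * real K * real \<tau>)"
  have Cp: "C \<tau> > 0" using C_pos[OF tau1] .
  have m_eq: "m = sqrt X"
  proof -
    have "m = min (1 / (2 * real K)) (sqrt X)" unfolding m_def mu_def X_def by simp
    moreover have "m \<noteq> 1 / (2 * real K)" using inv_big K_ge1 by auto
    ultimately show ?thesis by (simp add: min_def split: if_splits)
  qed
  have "m < 1 / (19 * real K)" using inv_big mpos K_ge1
    by (simp add: field_simps)
  then have "m ^ 2 < (1 / (19 * real K)) ^ 2" using mpos by (intro power_strict_mono) auto
  moreover have "m ^ 2 = X" unfolding m_eq X_def using Cp K_ge1 by simp
  ultimately have "C \<tau> / (2 * real K * real \<tau>) < 1 / (361 * real K * real K)"
    unfolding X_def by (simp add: power2_eq_square)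
  then have key: "361 * real K * C \<tau> < 2 * real \<tau>"
    using K_ge1 tau1 by (simp add: divide_simps) (simp add: algebra_simps)
  define L where "L = ln (real N * real \<tau> / \<delta>)"
  have CL: "C \<tau> = 2 * L" unfolding L_def Cc_def by simp
  have Lge: "L \<ge> ln (real \<tau>)" "L \<ge> ln (real N / \<delta>)" using C_ge_ln[OF tau1] CL by auto
  have "ln (real \<tau>) \<ge> ln 2" using t2 by simp
  then have L12: "L \<ge> 1/2" using Lge ln2_ge by linarith
  have keyL: "361 * real K * L < real \<tau>" using key CL by (simp add: mult_ac)
  have "361 * real K * (1/2) \<le> 361 * real K * L" using L12 K_ge1 by (intro mult_left_mono) auto
  then have "180 * real K \<le> 361 * real K * L" using K_ge1 by linarith
  then have tbig: "real \<tau> > 180 * real K" using keyL by linarith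
  then have "8 * real K \<le> real \<tau>" using K_ge1 by simp
  then have "ln (8 * real K) \<le> ln (real \<tau>)" using K_ge1 by simp
  then have l8: "ln (8 * real K) \<le> L" using Lge by simp
  have "ln (8 * real K * real N / \<delta>) = ln (8 * real K) + ln (real N / \<delta>)"
  proof -
    have "8 * real K * real N / \<delta> = (8 * real K) * (real N / \<delta>)" by simp
    moreover have "ln ((8 * real K) * (real N / \<delta>)) = ln (8 * real K) + ln (real N / \<delta>)"
      by (rule ln_mult_pos) (use K_ge1 N_ge1 \<delta>_pos in auto)
    ultimately show ?thesis by simp
  qed
  also have "\<dots> \<le> 2 * L" using l8 Lge by simp
  finally have "16 * real K * ln (8 * real K * real N / \<delta>) \<le> 16 * real K * (2 * L)"
    using K_ge1 by (intro mult_left_mono) auto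
  also have "\<dots> < real \<tau>" using keyL by simp
  finally have "t1 K N \<delta> \<le> \<tau>" unfolding t1_def by simp
  then show ?thesis using gt0 t2 tbig K_ge1 by simp
qed

lemma Dl_ge: "\<sigma>' \<in> Pol \<Longrightarrow> Dl s \<sigma> \<ge> eta s \<sigma>' - eta s \<sigma>"
  unfolding Delta_emp_def using Pi_fin by (simp add: Max_ge)

lemma Dl_nonneg: "\<sigma> \<in> Pol \<Longrightarrow> Dl s \<sigma> \<ge> 0"
  using Dl_ge[of \<sigma> s \<sigma>] by simp

lemma argmax_ex: "\<exists>\<sigma>\<in>Pol. Dl s \<sigma> = 0 \<and> (\<forall>\<sigma>'\<in>Pol. Dl s \<sigma>' = eta s \<sigma> - eta s \<sigma>')"
proof -
  have "Max ((\<lambda>\<pi>. eta s \<pi>) ` Pol) \<in> (\<lambda>\<pi>. eta s \<pi>) ` Pol"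
    using Pi_fin Pi_ne by (intro Max_in) auto
  then obtain \<sigma> where "\<sigma> \<in> Pol" "Max ((\<lambda>\<pi>. eta s \<pi>) ` Pol) = eta s \<sigma>" by auto
  then show ?thesis unfolding Delta_emp_def by (intro bexI[of _ \<sigma>]) auto
qed

lemma Wd_point: "Wd Pol (\<lambda>\<sigma>'. if \<sigma>' = \<sigma> then 1 else 0) = polW \<sigma>" if "\<sigma> \<in> Pol"
proof (intro ext)
  fix x a
  have "Wd Pol (\<lambda>\<sigma>'. if \<sigma>' = \<sigma> then 1 else 0) x a
        = (\<Sum>\<sigma>'\<in>{\<pi> \<in> Pol. \<pi> x = a}. if \<sigma>' = \<sigma> then 1 else 0)" unfolding Wd_def by simp
  also have "\<dots> = (if \<sigma> \<in> {\<pi> \<in> Pol. \<pi> x = a} then 1 else 0)"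
    using Pi_fin by (simp add: sum.delta')
  also have "\<dots> = polW \<sigma> x a" unfolding polW_def using that by auto
  finally show "Wd Pol (\<lambda>\<sigma>'. if \<sigma>' = \<sigma> then 1 else 0) x a = polW \<sigma> x a" .
qed

lemma core:
  assumes tau1: "1 \<le> \<tau>" and sig: "\<sigma> \<in> Pol" and big: "V \<tau> \<sigma> > \<theta> * real K"
  shows "Dl (\<tau> - 1) \<sigma> \<ge> 9 * sqrt (V \<tau> \<sigma> * C (\<tau> - 1) / real (\<tau> - 1))"
proof -
  have bv: "\<tau> > t0 K N \<delta>" "\<tau> \<ge> 2" "\<tau> \<ge> t1 K N \<delta>" using bigV[OF tau1 big] by auto
  define E where "E = emp_avg xs (\<tau> - 1) (\<lambda>x. inv_prob K N \<delta> Pol (Ps \<tau>) \<tau> x \<sigma>)"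
  define I where "I = (\<integral>z. inv_prob K N \<delta> Pol (Ps \<tau>) \<tau> (fst z) \<sigma> \<partial>D)"
  define v where "v = V \<tau> \<sigma>"
  have vI: "v = real K + I" unfolding v_def I_def Vt_def using bv by simp
  have c1: "I \<le> (1 + \<epsilon>) * E + \<rho> * real K" unfolding I_def E_def using cond1_i sig bv by auto
  have tp: "(1 - \<epsilon>) * v > 2 * (\<rho> + 1) * real K" using theta_prop big v_def by simp
  have e1: "(1 + \<epsilon>) * (v / 2) = v - ((1 - \<epsilon>) * v) / 2" by (simp add: field_simps)
  have e2: "2 * (\<rho> + 1) * real K = 2 * (\<rho> * real K) + 2 * real K" by (simp add: algebra_simps)
  have "(1 + \<epsilon>) * E > (1 + \<epsilon>) * (v / 2)" using c1 vI tp e1 e2 by linarith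
  then have Ev: "E > v / 2" using \<epsilon>_pos by simp
  have th: "\<theta> * real K \<ge> 20 * real K" using theta_ge K_ge1 by (simp add: mult_right_mono)
  have Kv: "real K < v / 20" using big th v_def by simp
  define Q where "Q = (\<lambda>\<sigma>'. if \<sigma>' = \<sigma> then 1 else (0::real))"
  have Qd: "is_dist Pol Q" unfolding is_dist_def Q_def using sig Pi_fin by (simp add: sum.delta')
  have lhs: "constr_lhs K N \<delta> Pol xs (Ps \<tau>) \<tau> Q = E"
  proof -
    have "(\<lambda>\<pi>. Q \<pi> * emp_avg xs (\<tau> - 1) (\<lambda>x. inv_prob K N \<delta> Pol (Ps \<tau>) \<tau> x \<pi>))
        = (\<lambda>\<pi>. if \<pi> = \<sigma> then emp_avg xs (\<tau> - 1) (\<lambda>x. inv_prob K N \<delta> Pol (Ps \<tau>) \<tau> x \<pi>) else 0)"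
      unfolding Q_def by auto
    then show ?thesis unfolding constr_lhs_def E_def by (simp only:) (simp add: sum.delta' sig Pi_fin)
  qed
  define T where "T = real (\<tau> - 1)"
  have Tpos: "T > 0" unfolding T_def using bv by simp
  have Cp: "C (\<tau> - 1) > 0" using C_pos[of "\<tau> - 1"] bv by simp
  define d where "d = Dl (\<tau> - 1) \<sigma>"
  have rhs: "constr_rhs K N \<delta> Pol xs as rs ps \<tau> Q = max (4 * real K) (T * d\<^sup>2 / (180 * C (\<tau> - 1)))"
    unfolding constr_rhs_def Q_def T_def d_def using Wd_point[OF sig] by simp
  have "E \<le> max (4 * real K) (T * d\<^sup>2 / (180 * C (\<tau> - 1))) + real K"
    using alg_constr Qd bv lhs rhs by (metis le_trans one_le_numeral)
  moreover have "E - real K > 4 * real K" using Ev Kv by simp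
  ultimately have "T * d\<^sup>2 / (180 * C (\<tau> - 1)) \<ge> E - real K" by (simp add: max_def split: if_splits)
  then have "T * d\<^sup>2 / (180 * C (\<tau> - 1)) > 9 * v / 20" using Ev Kv by simp
  then have "T * d\<^sup>2 > 9 * v / 20 * (180 * C (\<tau> - 1))" using Cp by (simp add: less_divide_eq)
  then have "T * d\<^sup>2 > 81 * (v * C (\<tau> - 1))" by simp
  then have "81 * (v * C (\<tau> - 1) / T) < d\<^sup>2" using Tpos by (simp add: divide_less_eq mult.commute)
  then have "sqrt (81 * (v * C (\<tau> - 1) / T)) \<le> sqrt (d\<^sup>2)" by (intro real_sqrt_le_mono) linarith
  moreover have "d \<ge> 0" unfolding d_def using Dl_nonneg[OF sig] .
  moreover have "sqrt (81 * (v * C (\<tau> - 1) / T)) = 9 * sqrt (v * C (\<tau> - 1) / T)"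
    by (subst real_sqrt_mult) simp
  ultimately have "9 * sqrt (v * C (\<tau> - 1) / T) \<le> d" by simp
  then show ?thesis unfolding d_def v_def T_def .
qed

lemma Vb_ge: "\<tau> \<in> {1..s} \<Longrightarrow> V \<tau> \<sigma> \<le> Vb s \<sigma>"
  unfolding Vbar_def by (intro Max_ge) auto

lemma Vb_attain: "s \<ge> 1 \<Longrightarrow> \<exists>\<tau>\<in>{1..s}. Vb s \<sigma> = V \<tau> \<sigma>"
proof -
  assume "s \<ge> 1"
  then have "Vb s \<sigma> \<in> (\<lambda>\<tau>. V \<tau> \<sigma>) ` {1..s}" unfolding Vbar_def by (intro Max_in) auto
  then show ?thesis by auto
qed

lemma Vb_mono: "1 \<le> s1 \<Longrightarrow> s1 \<le> s2 \<Longrightarrow> Vb s1 \<sigma> \<le> Vb s2 \<sigma>"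
  unfolding Vbar_def by (intro Max_mono) auto


lemma ratio: assumes "3 \<le> s1" "s1 \<le> s2" shows "C s2 / real s2 \<le> C s1 / real s1"
proof -
  define a where "a = real N / \<delta>"
  have a1: "a \<ge> 1" unfolding a_def using N_ge1 \<delta>_pos \<delta>_lt by (simp add: le_divide_eq)
  have e1: "real N * real s1 / \<delta> = a * real s1" "real N * real s2 / \<delta> = a * real s2" unfolding a_def by auto
  have "ln (a * real s2) / real s2 \<le> ln (a * real s1) / real s1"
    using assms a1 by (intro ratio0) auto
  then show ?thesis unfolding Cc_def e1 by simp
qed

lemma t1_ge1: "t1 K N \<delta> \<ge> 1"
proof -
  have "real K * real N \<ge> 1 * 1" using K_ge1 N_ge1 by (intro mult_mono) auto
  then have "8 * real K * real N > \<delta>" using \<delta>_lt by simp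
  then have "8 * real K * real N / \<delta> > 1" using \<delta>_pos by (simp add: less_divide_eq)
  then have "ln (8 * real K * real N / \<delta>) > 0" by simp
  then have "16 * real K * ln (8 * real K * real N / \<delta>) > 0" using K_ge1 by simp
  then show ?thesis unfolding t1_def by linarith
qed

lemma star_ex: "\<exists>\<sigma>s\<in>Pol. \<forall>\<sigma>\<in>Pol. etaD D \<sigma> \<le> etaD D \<sigma>s"
proof -
  have "Max (etaD D ` Pol) \<in> etaD D ` Pol" using Pi_fin Pi_ne by (intro Max_in) auto
  then obtain \<sigma>s where "\<sigma>s \<in> Pol" "Max (etaD D ` Pol) = etaD D \<sigma>s" by auto
  then show ?thesis using Pi_fin by (metis Max_ge finite_imageI image_eqI)
qed

lemma transfer:
  assumes IH: "\<forall>s'. 1 \<le> s' \<and> s' < s \<longrightarrow> (\<forall>\<sigma>\<in>Pol. Dl s' \<sigma> = 0 \<longrightarrow> Vb s' \<sigma> \<le> \<theta> * real K)"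
    and t2: "2 \<le> \<tau>" and ts: "\<tau> \<le> s" and tt0: "\<tau> > t0 K N \<delta>" and sig: "\<sigma> \<in> Pol"
    and W: "W \<ge> \<theta> * real K" and VbW: "Vb (\<tau> - 1) \<sigma> \<le> W"
  shows "\<exists>\<pi>'\<in>Pol. etaD D \<pi>' - etaD D \<sigma> \<ge> Dl (\<tau> - 1) \<sigma> - 3 * sqrt (W * C (\<tau> - 1) / real (\<tau> - 1))"
proof -
  obtain \<pi>' where pi': "\<pi>' \<in> Pol" "Dl (\<tau> - 1) \<pi>' = 0"
    and all: "\<forall>\<sigma>'\<in>Pol. Dl (\<tau> - 1) \<sigma>' = eta (\<tau> - 1) \<pi>' - eta (\<tau> - 1) \<sigma>'"
    using argmax_ex[of "\<tau> - 1"] by blast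
  have "1 \<le> \<tau> - 1 \<and> \<tau> - 1 < s" using t2 ts by arith
  then have "Vb (\<tau> - 1) \<pi>' \<le> \<theta> * real K" using IH pi' by blast
  then have sumW: "Vb (\<tau> - 1) \<pi>' + Vb (\<tau> - 1) \<sigma> \<le> 2 * W" using W VbW by simp
  have Cp: "C (\<tau> - 1) > 0" using C_pos[of "\<tau> - 1"] t2 by simp
  have Tp: "real (\<tau> - 1) > 0" using t2 by simp
  have c2: "\<bar>(eta (\<tau> - 1) \<pi>' - eta (\<tau> - 1) \<sigma>) - (etaD D \<pi>' - etaD D \<sigma>)\<bar>
      \<le> 2 * sqrt ((Vb (\<tau> - 1) \<pi>' + Vb (\<tau> - 1) \<sigma>) * C (\<tau> - 1) / real (\<tau> - 1))"
  proof -
    have t0le: "t0 K N \<delta> \<le> \<tau> - 1" using tt0 by simp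
    show ?thesis using cond1_ii pi'(1) sig t0le by blast
  qed
  have "(Vb (\<tau> - 1) \<pi>' + Vb (\<tau> - 1) \<sigma>) * C (\<tau> - 1) / real (\<tau> - 1) \<le> 2 * W * C (\<tau> - 1) / real (\<tau> - 1)"
    using sumW Cp Tp by (intro divide_right_mono mult_right_mono) auto
  then have "sqrt ((Vb (\<tau> - 1) \<pi>' + Vb (\<tau> - 1) \<sigma>) * C (\<tau> - 1) / real (\<tau> - 1))
      \<le> sqrt (2 * (W * C (\<tau> - 1) / real (\<tau> - 1)))" by (intro real_sqrt_le_mono) simp
  moreover have "W \<ge> 0" using W thK by linarith
  then have "2 * sqrt (2 * (W * C (\<tau> - 1) / real (\<tau> - 1))) \<le> 3 * sqrt (W * C (\<tau> - 1) / real (\<tau> - 1))"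
    using Cp Tp by (intro sq_helper) simp
  ultimately have "\<bar>(eta (\<tau> - 1) \<pi>' - eta (\<tau> - 1) \<sigma>) - (etaD D \<pi>' - etaD D \<sigma>)\<bar>
      \<le> 3 * sqrt (W * C (\<tau> - 1) / real (\<tau> - 1))" using c2 by linarith
  moreover have "Dl (\<tau> - 1) \<sigma> = eta (\<tau> - 1) \<pi>' - eta (\<tau> - 1) \<sigma>" using all sig by blast
  ultimately have "etaD D \<pi>' - etaD D \<sigma> \<ge> Dl (\<tau> - 1) \<sigma> - 3 * sqrt (W * C (\<tau> - 1) / real (\<tau> - 1))"
    by (simp only: abs_le_iff) linarith
  then show ?thesis using pi'(1) by blast
qed

lemma star_small:
  assumes IH: "\<forall>s'. 1 \<le> s' \<and> s' < s \<longrightarrow> (\<forall>\<sigma>\<in>Pol. Dl s' \<sigma> = 0 \<longrightarrow> Vb s' \<sigma> \<le> \<theta> * real K)"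
    and s1: "s \<ge> 1" and ss: "\<sigma>s \<in> Pol" and best: "\<forall>\<sigma>\<in>Pol. etaD D \<sigma> \<le> etaD D \<sigma>s"
  shows "Vb s \<sigma>s \<le> \<theta> * real K"
proof (rule ccontr)
  assume "\<not> ?thesis"
  then have big: "Vb s \<sigma>s > \<theta> * real K" by simp
  obtain \<tau> where tau: "\<tau> \<in> {1..s}" "Vb s \<sigma>s = V \<tau> \<sigma>s" using Vb_attain[OF s1] by blast
  have t1': "1 \<le> \<tau>" using tau by simp
  have bigt: "V \<tau> \<sigma>s > \<theta> * real K" using big tau by simp
  have bv: "\<tau> > t0 K N \<delta>" "\<tau> \<ge> 2" using bigV[OF t1' bigt] by auto
  define W where "W = V \<tau> \<sigma>s"
  define u where "u = sqrt (W * C (\<tau> - 1) / real (\<tau> - 1))"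
  have cr: "Dl (\<tau> - 1) \<sigma>s \<ge> 9 * u" using core[OF t1' ss bigt] unfolding u_def W_def .
  have "Vb (\<tau> - 1) \<sigma>s \<le> Vb s \<sigma>s" using bv tau by (intro Vb_mono) auto
  then have VbW: "Vb (\<tau> - 1) \<sigma>s \<le> W" using tau W_def by simp
  obtain \<pi>' where "\<pi>' \<in> Pol" "etaD D \<pi>' - etaD D \<sigma>s \<ge> Dl (\<tau> - 1) \<sigma>s - 3 * u"
    using transfer[OF IH bv(2) _ bv(1) ss _ VbW] tau bigt W_def u_def by auto
  then have "0 \<ge> 6 * u" using best cr by force
  moreover have "u > 0"
  proof -
    have "W > 0" using bigt W_def thK by linarith
    moreover have "C (\<tau> - 1) > 0" using C_pos[of "\<tau> - 1"] bv by simp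
    moreover have "real (\<tau> - 1) > 0" using bv by simp
    ultimately show ?thesis unfolding u_def by simp
  qed
  ultimately show False by simp
qed

lemma M:
  assumes IH: "\<forall>s'. 1 \<le> s' \<and> s' < s \<longrightarrow> (\<forall>\<sigma>\<in>Pol. Dl s' \<sigma> = 0 \<longrightarrow> Vb s' \<sigma> \<le> \<theta> * real K)"
    and s1: "s \<ge> 1" and sig: "\<sigma> \<in> Pol" and big: "Vb s \<sigma> > \<theta> * real K"
  shows "Dl s \<sigma> > 2 * sqrt (2 * Vb s \<sigma> * C s / real s)"
proof -
  obtain \<sigma>s where ss: "\<sigma>s \<in> Pol" and best: "\<forall>\<sigma>\<in>Pol. etaD D \<sigma> \<le> etaD D \<sigma>s" using star_ex by blast
  have small: "Vb s \<sigma>s \<le> \<theta> * real K" using star_small[OF IH s1 ss best] .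
  obtain \<tau> where tau: "\<tau> \<in> {1..s}" "Vb s \<sigma> = V \<tau> \<sigma>" using Vb_attain[OF s1] by blast
  have t1': "1 \<le> \<tau>" using tau by simp
  have bigt: "V \<tau> \<sigma> > \<theta> * real K" using big tau by simp
  have bv: "\<tau> > t0 K N \<delta>" "\<tau> \<ge> 2" "real \<tau> \<ge> 180" using bigV[OF t1' bigt] by auto
  define W where "W = Vb s \<sigma>"
  have WV: "W = V \<tau> \<sigma>" using tau W_def by simp
  define u where "u = sqrt (W * C (\<tau> - 1) / real (\<tau> - 1))"
  define w where "w = sqrt (W * C s / real s)"
  have cr: "Dl (\<tau> - 1) \<sigma> \<ge> 9 * u" using core[OF t1' sig bigt] unfolding u_def WV .
  have "Vb (\<tau> - 1) \<sigma> \<le> Vb s \<sigma>" using bv tau by (intro Vb_mono) auto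
  then have VbW: "Vb (\<tau> - 1) \<sigma> \<le> W" using W_def by simp
  have Wbig: "W \<ge> \<theta> * real K" using big W_def by simp
  obtain \<pi>' where pi': "\<pi>' \<in> Pol" "etaD D \<pi>' - etaD D \<sigma> \<ge> Dl (\<tau> - 1) \<sigma> - 3 * u"
    using transfer[OF IH bv(2) _ bv(1) sig Wbig VbW] tau u_def by auto
  then have eD: "etaD D \<sigma>s - etaD D \<sigma> \<ge> 6 * u" using best cr by force
  have Wpos: "W > 0" using big W_def thK by linarith
  have Csp: "C s > 0" using C_pos[OF s1] .
  have sp: "real s > 0" using s1 by simp
  have tge: "s \<ge> t0 K N \<delta>" using bv tau by simp
  have c2: "\<bar>(eta s \<sigma>s - eta s \<sigma>) - (etaD D \<sigma>s - etaD D \<sigma>)\<bar>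
      \<le> 2 * sqrt ((Vb s \<sigma>s + Vb s \<sigma>) * C s / real s)"
    using cond1_ii ss sig tge by auto
  have "Vb s \<sigma>s + Vb s \<sigma> \<le> 2 * W" using small Wbig W_def by simp
  then have "(Vb s \<sigma>s + Vb s \<sigma>) * C s / real s \<le> 2 * W * C s / real s"
    using Csp sp by (intro divide_right_mono mult_right_mono) auto
  then have "sqrt ((Vb s \<sigma>s + Vb s \<sigma>) * C s / real s) \<le> sqrt (2 * (W * C s / real s))"
    by (intro real_sqrt_le_mono) simp
  moreover have "2 * sqrt (2 * (W * C s / real s)) \<le> 3 * w"
    unfolding w_def using Wpos Csp sp by (intro sq_helper) simp
  ultimately have dev: "eta s \<sigma>s - eta s \<sigma> \<ge> 6 * u - 3 * w" using c2 eD by linarith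
  have "C s / real s \<le> C (\<tau> - 1) / real (\<tau> - 1)"
    using bv tau by (intro ratio) auto
  then have "W * C s / real s \<le> W * C (\<tau> - 1) / real (\<tau> - 1)"
    using Wpos by (simp add: mult_left_mono times_divide_eq_right[symmetric] del: times_divide_eq_right)
  then have wu: "w \<le> u" unfolding w_def u_def by (rule real_sqrt_le_mono)
  have "Dl s \<sigma> \<ge> eta s \<sigma>s - eta s \<sigma>" using Dl_ge[OF ss] .
  then have "Dl s \<sigma> \<ge> 3 * w" using dev wu by linarith
  moreover have "2 * sqrt (2 * (W * C s / real s)) < 3 * w"
    unfolding w_def using Wpos Csp sp by (intro sq_helper_strict) simp
  ultimately have "2 * sqrt (2 * (W * C s / real s)) < Dl s \<sigma>" by linarith
  moreover have eq: "2 * W * C s / real s = 2 * (W * C s / real s)" by simp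
  ultimately have "2 * sqrt (2 * W * C s / real s) < Dl s \<sigma>" by (simp only: eq)
  then show ?thesis by (simp only: W_def)
qed

lemma I: "s \<ge> 1 \<Longrightarrow> \<forall>\<sigma>\<in>Pol. Dl s \<sigma> = 0 \<longrightarrow> Vb s \<sigma> \<le> \<theta> * real K"
proof (induction s rule: less_induct)
  case (less s)
  show ?case
  proof (intro ballI impI)
    fix \<sigma> assume sig: "\<sigma> \<in> Pol" and z: "Dl s \<sigma> = 0"
    show "Vb s \<sigma> \<le> \<theta> * real K"
    proof (rule ccontr)
      assume "\<not> ?thesis"
      then have "Vb s \<sigma> > \<theta> * real K" by simp
      from M[OF _ less.prems sig this] less.IH
      have "Dl s \<sigma> > 2 * sqrt (2 * Vb s \<sigma> * C s / real s)" by blast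
      moreover have "2 * sqrt (2 * Vb s \<sigma> * C s / real s) \<ge> 0"
      proof -
        have "Vb s \<sigma> \<ge> 0" using \<open>Vb s \<sigma> > \<theta> * real K\<close> thK by linarith
        moreover have "C s > 0" using C_pos[OF less.prems] .
        ultimately show ?thesis by simp
      qed
      ultimately show False using z by simp
    qed
  qed
qed

lemma main:
  assumes "t \<ge> 1" "\<sigma> \<in> Pol" "Vb t \<sigma> > \<theta> * real K"
  shows "Dl t \<sigma> > 2 * sqrt (2 * Vb t \<sigma> * C t / real t)"
  using M[OF _ assms] I by blast

end

theorem lemma14:
  fixes A :: "'a set" and Pol :: "('x \<Rightarrow> 'a) set"
    and D :: "('x \<times> ('a \<Rightarrow> real)) measure"
    and \<delta> \<epsilon> c_opt :: real
    and xs :: "nat \<Rightarrow> 'x" and as :: "nat \<Rightarrow> 'a" and rs ps :: "nat \<Rightarrow> real"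
    and Ps :: "nat \<Rightarrow> ('x \<Rightarrow> 'a) \<Rightarrow> real"
    and \<pi> :: "'x \<Rightarrow> 'a" and t :: nat
    and K N :: nat and \<rho> \<theta> :: real
  defines "K \<equiv> card A" and "N \<equiv> card Pol"
    and "\<rho> \<equiv> 7500 / \<epsilon> ^ 3"
    and "\<theta> \<equiv> (\<rho> + 1) / (1 - (1 + \<epsilon>) / 2)"
  assumes A_fin: "finite A" and A_ne: "A \<noteq> {}"
    and Pi_fin: "finite Pol" and Pi_ne: "Pol \<noteq> {}"
    and Pi_A: "\<forall>\<sigma>\<in>Pol. \<forall>x. \<sigma> x \<in> A"
    and D_prob: "prob_space D"
    and D_meas_pol: "\<forall>\<sigma>\<in>Pol. (\<lambda>z. \<sigma> (fst z)) \<in> measurable D (count_space UNIV)"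
    and D_meas_rew: "\<forall>a\<in>A. (\<lambda>z. snd z a) \<in> borel_measurable D"
    and D_rew: "AE z in D. \<forall>a\<in>A. 0 \<le> snd z a \<and> snd z a \<le> 1"
    and \<delta>_pos: "0 < \<delta>" and \<delta>_lt: "\<delta> < 1"
    and \<epsilon>_pos: "0 < \<epsilon>" and \<epsilon>_lt: "\<epsilon> < 1"
    and c_opt_nonneg: "0 \<le> c_opt"
    \<comment> \<open>RandomizedUCB: properties of P_t, a_t, r_t, p_t at every round t \<ge> 1\<close>
    and alg_dist: "\<forall>s\<ge>1. is_dist Pol (Ps s)"
    and alg_constr: "\<forall>s\<ge>1. \<forall>Q. is_dist Pol Q \<longrightarrow>
        constr_lhs K N \<delta> Pol xs (Ps s) s Q \<le> constr_rhs K N \<delta> Pol xs as rs ps s Q + real K"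
    and alg_opt: "\<forall>s\<ge>1. \<forall>P. is_dist Pol P \<and>
        (\<forall>Q. is_dist Pol Q \<longrightarrow> constr_lhs K N \<delta> Pol xs P s Q \<le> constr_rhs K N \<delta> Pol xs as rs ps s Q)
        \<longrightarrow> objective Pol xs as rs ps s (Ps s)
              \<le> objective Pol xs as rs ps s P + c_opt * sqrt (real K * Cc N \<delta> s / real s)"
    and alg_act: "\<forall>s\<ge>1. as s \<in> A"
    and alg_rew: "\<forall>s\<ge>1. 0 \<le> rs s \<and> rs s \<le> 1"
    and alg_prob: "\<forall>s\<ge>1. ps s = (1 - real K * mu K N \<delta> s) * Wd Pol (Ps s) (xs s) (as s) + mu K N \<delta> s"
    \<comment> \<open>Condition 1\<close>
    and cond1_i: "\<forall>\<sigma>\<in>Pol. \<forall>s\<ge>t1 K N \<delta>.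
        (\<integral>z. inv_prob K N \<delta> Pol (Ps s) s (fst z) \<sigma> \<partial>D)
          \<le> (1 + \<epsilon>) * emp_avg xs (s - 1) (\<lambda>x. inv_prob K N \<delta> Pol (Ps s) s x \<sigma>) + \<rho> * real K"
    and cond1_ii: "\<forall>\<sigma>\<in>Pol. \<forall>\<sigma>'\<in>Pol. \<forall>s\<ge>t0 K N \<delta>.
        \<bar>(eta_emp xs as rs ps s (polW \<sigma>) - eta_emp xs as rs ps s (polW \<sigma>'))
           - (etaD D \<sigma> - etaD D \<sigma>')\<bar>
        \<le> 2 * sqrt ((Vbar D K N \<delta> Pol Ps s \<sigma> + Vbar D K N \<delta> Pol Ps s \<sigma>') * Cc N \<delta> s / real s)"
    and \<pi>_in: "\<pi> \<in> Pol"
    and t_ge: "t \<ge> t1 K N \<delta>"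
    and V_big: "Vbar D K N \<delta> Pol Ps t \<pi> > \<theta> * real K"
  shows "Delta_emp Pol xs as rs ps t (polW \<pi>)
           > 2 * sqrt (2 * Vbar D K N \<delta> Pol Ps t \<pi> * Cc N \<delta> t / real t)"
  proof -
  have d1: "K = card A" using assms(1) by simp
  have d2: "N = card Pol" using assms(2) by simp
  have d3: "\<rho> = 7500 / \<epsilon> ^ 3" using assms(3) by simp
  have d4: "\<theta> = (\<rho> + 1) / (1 - (1 + \<epsilon>) / 2)" using assms(4) by simp
  interpret R: rucb A Pol D \<delta> \<epsilon> xs as rs ps Ps K N \<rho> \<theta>
    by (rule rucb.intro) (fact d1 d2 d3 d4 A_fin A_ne Pi_fin Pi_ne D_prob \<delta>_pos \<delta>_lt \<epsilon>_pos \<epsilon>_lt alg_dist alg_constr cond1_i cond1_ii)+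
  have "t \<ge> 1" using R.t1_ge1 t_ge by simp
  then show ?thesis using R.main[OF _ \<pi>_in V_big] by simp
qed

end
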